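(* Let $n\ge4$, let $\mathbf A,\mathbf B\in\mathcal G_n$, let $f\colon\mathbf A\to\mathbf B$ be a homomorphism and let $\sigma\in\Sigma_n$. Then the following are equivalent: (1) $f$ is an embedding (injective); (2) for each $x\in D^\sigma(\mathbf A)$ there exists $y\in D^\sigma(\mathbf B)$ such that $y\circ f\simeq^\sigma_{D^\sigma(\mathbf A)}x$.
   Context: $\mathbf C_n$ is the Heyting algebra on the chain $\{0<1<\dots<n-1\}$, with min, max, $\bot=0$, $\top=n-1$, $a\to b=\top$ if $a\le b$, $a\to b=b$ if $b<a$. $\mathcal G_n$ is the class of algebras isomorphic to subalgebras of direct powers of $\mathbf C_n$; $\mathcal G_n(\mathbf A,\mathbf C_n)$ is the set of Heyting homomorphisms $\mathbf A\to\mathbf C_n$. For $n\ge4$: for $1\le i\le n-2$, $h_i$ is the endomorphism of $\mathbf C_n$ with $h_i(k)=k+1$ if $i\le k<n-1$ and $h_i(k)=k$ otherwise. For $1\le i\le n-3$, $g_i$ is the partial map with domain $C_n\setminus\{i\}$ with $g_i(i+1)=i$, $g_i(k)=k$ for $k\notin\{i,i+1\}$, and $f_i\colon C_n\setminus\{i+1\}\to C_n\setminus\{i\}$ is its inverse. $\Sigma_n=\{f_1,g_1\}\times\dots\times\{f_{n-3},g_{n-3}\}\times\{h_1,\dots,h_{n-2}\}$, elements written $\sigma=(\sigma_1,\dots,\sigma_{n-2})$. $D^\sigma(\mathbf A)$ is $\mathcal G_n(\mathbf A,\mathbf C_n)$ with lifted (partial) operations $\sigma_i^{\mathbf X}(x)=\sigma_i\circ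 x$, defined iff $\operatorname{ran}x\subseteq\operatorname{dom}\sigma_i$. For $\mathbf X=D^\sigma(\mathbf A)$, $x\simeq^\sigma_{\mathbf X}y$ iff $x=y$ or there is a finite sequence $x=z_0,\dots,z_N=y$ in $X$ such that for each $j<N$ some $i_j\in\{1,\dots,n-3\}$ satisfies $z_{j+1}=\sigma_{i_j}^{\mathbf X}(z_j)$ or $z_j=\sigma_{i_j}^{\mathbf X}(z_{j+1})$. *)

theory Defs
  imports "HOL-Library.FuncSet"
begin

record 'a halg =
  hcarrier :: "'a set"
  hmeet :: "'a \<Rightarrow> 'a \<Rightarrow> 'a"
  hjoin :: "'a \<Rightarrow> 'a \<Rightarrow> 'a"
  himp  :: "'a \<Rightarrow> 'a \<Rightarrow> 'a"
  hbot  :: "'a"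
  htop  :: "'a"

definition closed_alg :: "'a halg \<Rightarrow> bool" where
  "closed_alg A \<longleftrightarrow>
     hbot A \<in> hcarrier A \<and> htop A \<in> hcarrier A \<and>
     (\<forall>a\<in>hcarrier A. \<forall>b\<in>hcarrier A.
        hmeet A a b \<in> hcarrier A \<and> hjoin A a b \<in> hcarrier A \<and> himp A a b \<in> hcarrier A)"

definition hom :: "'a halg \<Rightarrow> 'b halg \<Rightarrow> ('a \<Rightarrow> 'b) \<Rightarrow> bool" where
  "hom A B h \<longleftrightarrow>
     h ` hcarrier A \<subseteq> hcarrier B \<and>
     h (hbot A) = hbot B \<and> h (htop A) = htop B \<and>
     (\<forall>a\<in>hcarrier A. \<forall>b\<in>hcarrier A.
        h (hmeet A a b) = hmeet B (h a) (h b) \<and>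
        h (hjoin A a b) = hjoin B (h a) (h b) \<and>
        h (himp A a b) = himp B (h a) (h b))"

definition embedding :: "'a halg \<Rightarrow> 'b halg \<Rightarrow> ('a \<Rightarrow> 'b) \<Rightarrow> bool" where
  "embedding A B h \<longleftrightarrow> hom A B h \<and> inj_on h (hcarrier A)"

definition chain_imp :: "nat \<Rightarrow> nat \<Rightarrow> nat \<Rightarrow> nat" where
  "chain_imp n a b = (if a \<le> b then n - 1 else b)"

definition Cn :: "nat \<Rightarrow> nat halg" where
  "Cn n = \<lparr> hcarrier = {0..<n}, hmeet = min, hjoin = max, himp = chain_imp n,
            hbot = 0, htop = n - 1 \<rparr>"

definition Cn_power :: "nat \<Rightarrow> 'i set \<Rightarrow> ('i \<Rightarrow> nat) halg" where
  "Cn_power n I = \<lparr> hcarrier = I \<rightarrow>\<^sub>E {0..<n},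
      hmeet = (\<lambda>x y. restrict (\<lambda>i. min (x i) (y i)) I),
      hjoin = (\<lambda>x y. restrict (\<lambda>i. max (x i) (y i)) I),
      himp = (\<lambda>x y. restrict (\<lambda>i. chain_imp n (x i) (y i)) I),
      hbot = restrict (\<lambda>i. 0) I,
      htop = restrict (\<lambda>i. n - 1) I \<rparr>"

text \<open>Membership in G_n: isomorphic to a subalgebra of a direct power of C_n.
  The index set is taken of type (a => nat) set, large enough for any algebra on 'a.\<close>
definition in_Gn :: "nat \<Rightarrow> 'a halg \<Rightarrow> bool" where
  "in_Gn n A \<longleftrightarrow> closed_alg A \<and>
     (\<exists>(I :: ('a \<Rightarrow> nat) set) e. embedding A (Cn_power n I) e)"

definition homs_to_Cn :: "nat \<Rightarrow> 'a halg \<Rightarrow> ('a \<Rightarrow> nat) set" where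
  "homs_to_Cn n A = {x \<in> extensional (hcarrier A). hom A (Cn n) x}"

definition h_pm :: "nat \<Rightarrow> nat \<Rightarrow> nat \<rightharpoonup> nat" where
  "h_pm n i k = (if k < n then Some (if i \<le> k \<and> k < n - 1 then k + 1 else k) else None)"

definition g_pm :: "nat \<Rightarrow> nat \<Rightarrow> nat \<rightharpoonup> nat" where
  "g_pm n i k = (if k < n \<and> k \<noteq> i then Some (if k = i + 1 then i else k) else None)"

definition f_pm :: "nat \<Rightarrow> nat \<Rightarrow> nat \<rightharpoonup> nat" where
  "f_pm n i k = (if k < n \<and> k \<noteq> i + 1 then Some (if k = i then i + 1 else k) else None)"

text \<open>sigma = (sigma_1, ..., sigma_{n-2}) encoded as a function of the index;
  entries outside 1..n-2 are empty.\<close>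
definition Sigma_n :: "nat \<Rightarrow> (nat \<Rightarrow> (nat \<rightharpoonup> nat)) set" where
  "Sigma_n n = {\<sigma>. (\<forall>i \<in> {1..n-3}. \<sigma> i = f_pm n i \<or> \<sigma> i = g_pm n i) \<and>
                   (\<exists>j \<in> {1..n-2}. \<sigma> (n - 2) = h_pm n j) \<and>
                   (\<forall>i. i = 0 \<or> n - 2 < i \<longrightarrow> \<sigma> i = Map.empty)}"

definition lift_op :: "'a halg \<Rightarrow> (nat \<rightharpoonup> nat) \<Rightarrow> ('a \<Rightarrow> nat) \<Rightarrow> ('a \<Rightarrow> nat) option" where
  "lift_op A s x = (if x ` hcarrier A \<subseteq> dom s
                    then Some (restrict (\<lambda>a. the (s (x a))) (hcarrier A)) else None)"

definition simeq :: "nat \<Rightarrow> (nat \<Rightarrow> (nat \<rightharpoonup> nat)) \<Rightarrow> 'a halg \<Rightarrow> ('a \<Rightarrow> nat) \<Rightarrow> ('a \<Rightarrow> nat) \<Rightarrow> bool" where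
  "simeq n \<sigma> A x y \<longleftrightarrow> x = y \<or>
     (\<exists>zs :: ('a \<Rightarrow> nat) list. zs \<noteq> [] \<and> hd zs = x \<and> last zs = y \<and>
        set zs \<subseteq> homs_to_Cn n A \<and>
        (\<forall>j. Suc j < length zs \<longrightarrow>
           (\<exists>i \<in> {1..n-3}. lift_op A (\<sigma> i) (zs ! j) = Some (zs ! Suc j) \<or>
                            lift_op A (\<sigma> i) (zs ! Suc j) = Some (zs ! j))))"

end

theory Submission
  imports Defs "HOL-Analysis.Function_Topology"
begin


lemma hom_Cn_iff:
  "hom A (Cn n) x \<longleftrightarrow> x ` hcarrier A \<subseteq> {0..<n} \<and> x (hbot A) = 0 \<and> x (htop A) = n - 1 \<and>
     (\<forall>a\<in>hcarrier A. \<forall>b\<in>hcarrier A. x (hmeet A a b) = min (x a) (x b) \<and>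
        x (hjoin A a b) = max (x a) (x b) \<and> x (himp A a b) = chain_imp n (x a) (x b))"
  by (simp add: hom_def Cn_def)

lemma chain_imp_top: "p < n \<Longrightarrow> q < n \<Longrightarrow> chain_imp n p q = n - 1 \<longleftrightarrow> p \<le> q"
  by (auto simp: chain_imp_def)

lemma homs_iff: "x \<in> homs_to_Cn n A \<longleftrightarrow> x \<in> extensional (hcarrier A) \<and> hom A (Cn n) x"
  by (simp add: homs_to_Cn_def)

lemma comp_hom:
  assumes u: "u \<in> homs_to_Cn n A" and cl: "closed_alg A"
    and mn: "\<And>p q. p \<in> u ` hcarrier A \<Longrightarrow> q \<in> u ` hcarrier A \<Longrightarrow> \<psi> (min p q) = min (\<psi> p) (\<psi> q)"
    and mx: "\<And>p q. p \<in> u ` hcarrier A \<Longrightarrow> q \<in> u ` hcarrier A \<Longrightarrow> \<psi> (max p q) = max (\<psi> p) (\<psi> q)"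
    and im: "\<And>p q. p \<in> u ` hcarrier A \<Longrightarrow> q \<in> u ` hcarrier A \<Longrightarrow> \<psi> (chain_imp n p q) = chain_imp n (\<psi> p) (\<psi> q)"
    and z: "\<psi> 0 = 0" and t: "\<psi> (n - 1) = n - 1"
    and rng: "\<And>p. p \<in> u ` hcarrier A \<Longrightarrow> \<psi> p < n"
  shows "restrict (\<psi> \<circ> u) (hcarrier A) \<in> homs_to_Cn n A"
proof -
  have h: "hom A (Cn n) u" using u by (simp add: homs_iff)
  have cl': "hbot A \<in> hcarrier A" "htop A \<in> hcarrier A"
    "\<And>a b. a \<in> hcarrier A \<Longrightarrow> b \<in> hcarrier A \<Longrightarrow> hmeet A a b \<in> hcarrier A \<and> hjoin A a b \<in> hcarrier A \<and> himp A a b \<in> hcarrier A"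
    using cl by (auto simp: closed_alg_def)
  show ?thesis unfolding homs_iff hom_Cn_iff
    using h cl' unfolding hom_Cn_iff
    using t by (auto simp: z rng mn mx im)
qed

lemma step_inj:
  assumes "s = f_pm n i \<or> s = g_pm n i" "p \<in> dom s" "q \<in> dom s" "the (s p) = the (s q)"
  shows "p = q"
  using assms by (auto simp: f_pm_def g_pm_def split: if_splits)

lemma step_kernel:
  assumes "s = f_pm n i \<or> s = g_pm n i" "lift_op A s z = Some z'" "a \<in> hcarrier A" "b \<in> hcarrier A"
  shows "z a = z b \<longleftrightarrow> z' a = z' b"
proof -
  have d: "z ` hcarrier A \<subseteq> dom s" and z': "z' = restrict (\<lambda>a. the (s (z a))) (hcarrier A)"
    using assms(2) by (auto simp: lift_op_def split: if_splits)
  have "z a \<in> dom s" "z b \<in> dom s" using assms(3,4) d by auto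
  then show ?thesis using assms(3,4) step_inj[OF assms(1)] unfolding z' by auto
qed

lemma Sigma_nD: "\<sigma> \<in> Sigma_n n \<Longrightarrow> i \<in> {1..n-3} \<Longrightarrow> \<sigma> i = f_pm n i \<or> \<sigma> i = g_pm n i"
  by (auto simp: Sigma_n_def)

lemma simeq_kernel:
  assumes sig: "\<sigma> \<in> Sigma_n n" and s: "simeq n \<sigma> A u x" and ab: "a \<in> hcarrier A" "b \<in> hcarrier A"
  shows "u a = u b \<longleftrightarrow> x a = x b"
proof (cases "u = x")
  case True then show ?thesis by simp
next
  case False
  then obtain zs where zs: "zs \<noteq> []" "hd zs = u" "last zs = x"
    and st: "\<And>j. Suc j < length zs \<Longrightarrow> (\<exists>i \<in> {1..n-3}. lift_op A (\<sigma> i) (zs ! j) = Some (zs ! Suc j) \<or>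
                            lift_op A (\<sigma> i) (zs ! Suc j) = Some (zs ! j))"
    using s unfolding simeq_def by blast
  have "j < length zs \<Longrightarrow> (zs ! j) a = (zs ! j) b \<longleftrightarrow> u a = u b" for j
  proof (induction j)
    case 0 then show ?case using zs by (simp add: hd_conv_nth)
  next
    case (Suc j)
    then obtain i where i: "i \<in> {1..n-3}" and o: "lift_op A (\<sigma> i) (zs ! j) = Some (zs ! Suc j) \<or>
                            lift_op A (\<sigma> i) (zs ! Suc j) = Some (zs ! j)" using st by blast
    have "(zs ! j) a = (zs ! j) b \<longleftrightarrow> (zs ! Suc j) a = (zs ! Suc j) b"
      using o step_kernel[OF Sigma_nD[OF sig i] _ ab] by blast
    then show ?case using Suc by simp
  qed
  from this[of "length zs - 1"] zs show ?thesis by (simp add: last_conv_nth)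
qed



definition stp :: "nat \<Rightarrow> (nat \<Rightarrow> (nat \<rightharpoonup> nat)) \<Rightarrow> 'a halg \<Rightarrow> ('a \<Rightarrow> nat) \<Rightarrow> ('a \<Rightarrow> nat) \<Rightarrow> bool" where
  "stp n \<sigma> A u v \<longleftrightarrow> u \<in> homs_to_Cn n A \<and> v \<in> homs_to_Cn n A \<and>
     (\<exists>i\<in>{1..n-3}. lift_op A (\<sigma> i) u = Some v \<or> lift_op A (\<sigma> i) v = Some u)"

lemma rtranclp_simeq:
  assumes "(stp n \<sigma> A)\<^sup>*\<^sup>* u v" shows "simeq n \<sigma> A u v"
  using assms
proof (induction rule: rtranclp_induct)
  case base then show ?case by (simp add: simeq_def)
next
  case (step y z)
  have yz: "y \<in> homs_to_Cn n A" "z \<in> homs_to_Cn n A"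
    and o: "\<exists>i\<in>{1..n-3}. lift_op A (\<sigma> i) y = Some z \<or> lift_op A (\<sigma> i) z = Some y"
    using step.hyps(2) by (auto simp: stp_def)
  show ?case
  proof (cases "u = y")
    case True
    have "\<forall>j. Suc j < length [y, z] \<longrightarrow>
           (\<exists>i \<in> {1..n-3}. lift_op A (\<sigma> i) ([y,z] ! j) = Some ([y,z] ! Suc j) \<or>
                            lift_op A (\<sigma> i) ([y,z] ! Suc j) = Some ([y,z] ! j))"
      using o by auto
    then show ?thesis unfolding simeq_def using True yz
      by (intro disjI2 exI[of _ "[y,z]"]) auto
  next
    case False
    then obtain zs where zs: "zs \<noteq> []" "hd zs = u" "last zs = y" "set zs \<subseteq> homs_to_Cn n A"
      and st: "\<forall>j. Suc j < length zs \<longrightarrow> (\<exists>i \<in> {1..n-3}. lift_op A (\<sigma> i) (zs ! j) = Some (zs ! Suc j) \<or>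
                            lift_op A (\<sigma> i) (zs ! Suc j) = Some (zs ! j))"
      using step.IH unfolding simeq_def by blast
    have "\<forall>j. Suc j < length (zs @ [z]) \<longrightarrow>
           (\<exists>i \<in> {1..n-3}. lift_op A (\<sigma> i) ((zs @ [z]) ! j) = Some ((zs @ [z]) ! Suc j) \<or>
                            lift_op A (\<sigma> i) ((zs @ [z]) ! Suc j) = Some ((zs @ [z]) ! j))"
    proof (intro allI impI)
      fix j assume j: "Suc j < length (zs @ [z])"
      show "\<exists>i \<in> {1..n-3}. lift_op A (\<sigma> i) ((zs @ [z]) ! j) = Some ((zs @ [z]) ! Suc j) \<or>
                            lift_op A (\<sigma> i) ((zs @ [z]) ! Suc j) = Some ((zs @ [z]) ! j)"
      proof (cases "Suc j < length zs")
        case True then show ?thesis using st by (simp add: nth_append)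
      next
        case False
        then have "Suc j = length zs" using j by simp
        then have jj: "j = length zs - 1" by simp
        then have "(zs @ [z]) ! j = y" "(zs @ [z]) ! Suc j = z"
          using zs \<open>Suc j = length zs\<close> by (auto simp: nth_append last_conv_nth)
        then show ?thesis using o by simp
      qed
    qed
    then show ?thesis unfolding simeq_def using zs yz
      by (intro disjI2 exI[of _ "zs @ [z]"]) auto
  qed
qed

lemma stp_sym: "stp n \<sigma> A u v \<Longrightarrow> stp n \<sigma> A v u"
  unfolding stp_def by blast

lemma rtranclp_sym_gen: "r\<^sup>*\<^sup>* x y \<Longrightarrow> (\<And>a b. r a b \<Longrightarrow> r b a) \<Longrightarrow> r\<^sup>*\<^sup>* y x"
  by (induction rule: rtranclp_induct) (auto intro: converse_rtranclp_into_rtranclp)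

definition gapfree :: "nat \<Rightarrow> 'a halg \<Rightarrow> ('a \<Rightarrow> nat) \<Rightarrow> bool" where
  "gapfree n A u \<longleftrightarrow> (\<forall>v\<in>u ` hcarrier A. 2 \<le> v \<longrightarrow> v < n - 1 \<longrightarrow> v - 1 \<in> u ` hcarrier A)"

definition Msum :: "nat \<Rightarrow> 'a halg \<Rightarrow> ('a \<Rightarrow> nat) \<Rightarrow> nat" where
  "Msum n A u = (\<Sum>k \<in> {k. k < n - 1 \<and> k \<in> u ` hcarrier A}. k)"

lemma homs_range: "u \<in> homs_to_Cn n A \<Longrightarrow> a \<in> hcarrier A \<Longrightarrow> u a < n"
  by (auto simp: homs_iff hom_Cn_iff)

lemma slide_step:
  assumes sig: "\<sigma> \<in> Sigma_n n" and cl: "closed_alg A" and u: "u \<in> homs_to_Cn n A"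
    and v: "v \<in> u ` hcarrier A" "2 \<le> v" "v < n - 1" "v - 1 \<notin> u ` hcarrier A"
  shows "\<exists>u1. stp n \<sigma> A u u1 \<and> Msum n A u1 < Msum n A u \<and> u1 \<in> homs_to_Cn n A \<and>
             (\<forall>a\<in>hcarrier A. \<forall>b\<in>hcarrier A. u1 a = u1 b \<longleftrightarrow> u a = u b)"
proof -
  define S where "S = u ` hcarrier A"
  define \<psi> where "\<psi> = (\<lambda>k::nat. if k = v then v - 1 else k)"
  define u1 where "u1 = restrict (\<psi> \<circ> u) (hcarrier A)"
  have ne: "p \<in> S \<Longrightarrow> p \<noteq> v - 1" for p
  proof
    assume "p \<in> S" "p = v - 1" then show False using v(4) unfolding S_def by simp
  qed
  have le: "\<psi> p \<le> \<psi> q \<longleftrightarrow> p \<le> q" if "p \<in> S" "q \<in> S" for p q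
  proof -
    have "p \<noteq> v - 1" "q \<noteq> v - 1" using ne that by auto
    then show ?thesis using v(2) unfolding \<psi>_def by (cases "p = v"; cases "q = v") (simp_all, linarith+)
  qed
  have Sn: "p \<in> S \<Longrightarrow> p < n" for p using homs_range[OF u] unfolding S_def by auto
  have u1h: "u1 \<in> homs_to_Cn n A" unfolding u1_def
  proof (rule comp_hom[OF u cl])
    fix p q assume pq: "p \<in> u ` hcarrier A" "q \<in> u ` hcarrier A"
    then have pq': "p \<in> S" "q \<in> S" by (auto simp: S_def)
    show "\<psi> (min p q) = min (\<psi> p) (\<psi> q)" using le[OF pq'] le[OF pq'(2,1)]
      by (cases "p \<le> q") (auto simp: min_def)
    show "\<psi> (max p q) = max (\<psi> p) (\<psi> q)" using le[OF pq'] le[OF pq'(2,1)]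
      by (cases "p \<le> q") (auto simp: max_def)
    show "\<psi> (chain_imp n p q) = chain_imp n (\<psi> p) (\<psi> q)" using le[OF pq'] le[OF pq'(2,1)] v(3)
      by (cases "p \<le> q") (auto simp: chain_imp_def \<psi>_def)
  next
    show "\<psi> 0 = 0" "\<psi> (n - 1) = n - 1" using v by (auto simp: \<psi>_def)
  next
    fix p assume "p \<in> u ` hcarrier A" then show "\<psi> p < n" using Sn v unfolding S_def \<psi>_def by auto
  qed
  define i where "i = v - 1"
  have i: "i \<in> {1..n-3}" using v unfolding i_def by auto
  have uS: "u a < n \<and> u a \<noteq> i" if "a \<in> hcarrier A" for a
  proof -
    have "u a \<in> S" using that by (simp add: S_def)
    then show ?thesis using Sn ne unfolding i_def by blast
  qed
  have ext: "u = restrict u (hcarrier A)" using u by (simp add: homs_iff extensional_restrict)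
  have stp: "stp n \<sigma> A u u1"
  proof -
    have "lift_op A (\<sigma> i) u = Some u1 \<or> lift_op A (\<sigma> i) u1 = Some u"
    proof (cases "\<sigma> i = g_pm n i")
      case True
      have d: "u ` hcarrier A \<subseteq> dom (g_pm n i)"
        using uS by (auto simp: g_pm_def)
      have "restrict (\<lambda>a. the (g_pm n i (u a))) (hcarrier A) = u1"
        unfolding u1_def
      proof (rule restrict_ext)
        fix a assume "a \<in> hcarrier A"
        then have "u a < n" "u a \<noteq> i" using uS by auto
        then show "the (g_pm n i (u a)) = (\<psi> \<circ> u) a" using v unfolding g_pm_def \<psi>_def i_def by auto
      qed
      then show ?thesis using True d by (simp add: lift_op_def)
    next
      case False
      then have F: "\<sigma> i = f_pm n i" using Sigma_nD[OF sig i] by blast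
      have d: "u1 ` hcarrier A \<subseteq> dom (f_pm n i)"
      proof
        fix w assume "w \<in> u1 ` hcarrier A"
        then obtain a where a: "a \<in> hcarrier A" "w = \<psi> (u a)" by (auto simp: u1_def)
        have "u a < n" "u a \<noteq> i" using uS[OF a(1)] by auto
        then show "w \<in> dom (f_pm n i)" using a(2) v(2,3) unfolding f_pm_def \<psi>_def i_def by auto
      qed
      have "restrict (\<lambda>a. the (f_pm n i (u1 a))) (hcarrier A) = restrict u (hcarrier A)"
      proof (rule restrict_ext)
        fix a assume "a \<in> hcarrier A"
        then have "u a < n" "u a \<noteq> i" using uS by auto
        then show "the (f_pm n i (u1 a)) = u a" using v \<open>a \<in> hcarrier A\<close>
          unfolding f_pm_def \<psi>_def i_def u1_def by auto
      qed
      then show ?thesis using F d ext by (simp add: lift_op_def)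
    qed
    then show ?thesis using u u1h i unfolding stp_def by blast
  qed
  have pinj: "p = q" if "p \<in> S" "q \<in> S" "\<psi> p = \<psi> q" for p q
    using le[OF that(1,2)] le[OF that(2,1)] that(3) by simp
  have ker: "\<forall>a\<in>hcarrier A. \<forall>b\<in>hcarrier A. u1 a = u1 b \<longleftrightarrow> u a = u b"
  proof (intro ballI)
    fix a b assume ab: "a \<in> hcarrier A" "b \<in> hcarrier A"
    then have "u a \<in> S" "u b \<in> S" by (auto simp: S_def)
    then show "u1 a = u1 b \<longleftrightarrow> u a = u b" using pinj ab unfolding u1_def by auto
  qed
  define T where "T = {k. k < n - 1 \<and> k \<in> S}"
  have fin: "finite T" unfolding T_def by auto
  have img: "{k. k < n - 1 \<and> k \<in> u1 ` hcarrier A} = \<psi> ` T"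
  proof -
    have "u1 ` hcarrier A = \<psi> ` S" unfolding u1_def S_def by auto
    moreover have "p \<in> S \<Longrightarrow> \<psi> p < n - 1 \<longleftrightarrow> p < n - 1" for p using v unfolding \<psi>_def by auto
    ultimately show ?thesis unfolding T_def by auto
  qed
  have inj: "inj_on \<psi> T" unfolding inj_on_def T_def using pinj by blast
  have "Msum n A u1 = sum \<psi> T" unfolding Msum_def img using sum.reindex[OF inj] by simp
  also have "\<dots> < sum (\<lambda>k. k) T"
  proof (rule sum_strict_mono_ex1[OF fin])
    show "\<forall>x\<in>T. \<psi> x \<le> x" unfolding \<psi>_def by auto
    show "\<exists>a\<in>T. \<psi> a < a" using v unfolding T_def S_def \<psi>_def by (intro bexI[of _ v]) auto
  qed
  also have "\<dots> = Msum n A u" unfolding Msum_def T_def S_def by simp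
  finally show ?thesis using stp u1h ker by blast
qed



lemma gapfree_reach:
  assumes sig: "\<sigma> \<in> Sigma_n n" and cl: "closed_alg A" and u: "u \<in> homs_to_Cn n A"
  shows "\<exists>u'. (stp n \<sigma> A)\<^sup>*\<^sup>* u u' \<and> gapfree n A u' \<and> u' \<in> homs_to_Cn n A \<and>
             (\<forall>a\<in>hcarrier A. \<forall>b\<in>hcarrier A. u' a = u' b \<longleftrightarrow> u a = u b)"
  using u
proof (induction "Msum n A u" arbitrary: u rule: less_induct)
  case less
  show ?case
  proof (cases "gapfree n A u")
    case True then show ?thesis using less.prems by (intro exI[of _ u]) auto
  next
    case False
    then obtain v where v: "v \<in> u ` hcarrier A" "2 \<le> v" "v < n - 1" "v - 1 \<notin> u ` hcarrier A"
      unfolding gapfree_def by blast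
    from slide_step[OF sig cl less.prems v] obtain u1 where
      u1: "stp n \<sigma> A u u1" "Msum n A u1 < Msum n A u" "u1 \<in> homs_to_Cn n A"
          "\<forall>a\<in>hcarrier A. \<forall>b\<in>hcarrier A. u1 a = u1 b \<longleftrightarrow> u a = u b" by blast
    from less.hyps[OF u1(2) u1(3)] obtain u' where
      u': "(stp n \<sigma> A)\<^sup>*\<^sup>* u1 u'" "gapfree n A u'" "u' \<in> homs_to_Cn n A"
          "\<forall>a\<in>hcarrier A. \<forall>b\<in>hcarrier A. u' a = u' b \<longleftrightarrow> u1 a = u1 b" by blast
    have "(stp n \<sigma> A)\<^sup>*\<^sup>* u u'" using u1(1) u'(1) by (rule converse_rtranclp_into_rtranclp)
    then show ?thesis using u' u1(4) by (intro exI[of _ u']) auto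
  qed
qed

lemma gapfree_eq:
  assumes cl: "closed_alg A" and u: "u \<in> homs_to_Cn n A" and x: "x \<in> homs_to_Cn n A"
    and gu: "gapfree n A u" and gx: "gapfree n A x"
    and ker: "\<forall>a\<in>hcarrier A. \<forall>b\<in>hcarrier A. u a = u b \<longleftrightarrow> x a = x b"
  shows "u = x"
proof -
  have bt: "hbot A \<in> hcarrier A" "htop A \<in> hcarrier A" and
    mc: "\<And>a b. a \<in> hcarrier A \<Longrightarrow> b \<in> hcarrier A \<Longrightarrow> hmeet A a b \<in> hcarrier A"
    using cl by (auto simp: closed_alg_def)
  have hu: "hom A (Cn n) u" and hx: "hom A (Cn n) x" using u x by (auto simp: homs_iff)
  have ub: "u (hbot A) = 0" "u (htop A) = n - 1"
    and um: "\<And>a b. a \<in> hcarrier A \<Longrightarrow> b \<in> hcarrier A \<Longrightarrow> u (hmeet A a b) = min (u a) (u b)"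
    using hu by (auto simp: hom_Cn_iff)
  have xb: "x (hbot A) = 0" "x (htop A) = n - 1"
    and xm: "\<And>a b. a \<in> hcarrier A \<Longrightarrow> b \<in> hcarrier A \<Longrightarrow> x (hmeet A a b) = min (x a) (x b)"
    using hx by (auto simp: hom_Cn_iff)
  have ord: "u a \<le> u b \<longleftrightarrow> x a \<le> x b" if "a \<in> hcarrier A" "b \<in> hcarrier A" for a b
  proof -
    have "u a \<le> u b \<longleftrightarrow> u (hmeet A a b) = u a" using um[OF that] by (simp add: min_def)
    also have "\<dots> \<longleftrightarrow> x (hmeet A a b) = x a" using ker mc[OF that] that by blast
    also have "\<dots> \<longleftrightarrow> x a \<le> x b" using xm[OF that] by (simp add: min_def)
    finally show ?thesis .
  qed
  have lt: "u a < u b \<longleftrightarrow> x a < x b" if "a \<in> hcarrier A" "b \<in> hcarrier A" for a b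
    using ord[OF that(2,1)] by (simp add: not_le[symmetric])
  have tp: "u a = n - 1 \<longleftrightarrow> x a = n - 1" if "a \<in> hcarrier A" for a
    using ker that bt ub xb by metis
  have zr: "u a = 0 \<longleftrightarrow> x a = 0" if "a \<in> hcarrier A" for a
    using ker that bt ub xb by metis
  have claim: "\<forall>a\<in>hcarrier A. u a = v \<longrightarrow> x a = v" for v
  proof (induction v rule: less_induct)
    case (less v)
    show ?case
    proof (intro ballI impI)
      fix a assume a: "a \<in> hcarrier A" and uav: "u a = v"
      show "x a = v"
      proof (cases "v = n - 1 \<or> v = 0")
        case True then show ?thesis using tp[OF a] zr[OF a] uav by auto
      next
        case False
        then have v0: "0 < v" "v \<noteq> n - 1" by auto
        have "v < n" using homs_range[OF u a] uav by simp
        then have vn: "v < n - 1" using v0 by simp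
        obtain b where b: "b \<in> hcarrier A" "u b = v - 1"
        proof (cases "v = 1")
          case True then show ?thesis using that[of "hbot A"] bt ub by simp
        next
          case False
          then have "v - 1 \<in> u ` hcarrier A" using gu a uav v0 vn unfolding gapfree_def by auto
          then show ?thesis using that by (metis imageE)
        qed
        have xbv: "x b = v - 1" using less.IH[of "v - 1"] v0 b by auto
        have "u b < u a" using b uav v0 by simp
        then have "x b < x a" using lt[OF b(1) a] by simp
        then have ge: "v \<le> x a" using xbv v0 by simp
        have xan: "x a \<noteq> n - 1" using tp[OF a] uav v0 by simp
        have xa_lt: "x a < n" using homs_range[OF x a] .
        show "x a = v"
        proof (rule ccontr)
          assume "x a \<noteq> v"
          then have g: "v < x a" using ge by simp
          have "x a - 1 \<in> x ` hcarrier A" using gx a g v0 xan xa_lt unfolding gapfree_def by auto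
          then obtain c where c: "c \<in> hcarrier A" "x c = x a - 1" by auto
          have "x b < x c" "x c < x a" using c xbv g v0 by auto
          then have "u b < u c" "u c < u a" using lt[OF b(1) c(1)] lt[OF c(1) a] by auto
          then show False using b uav v0 by simp
        qed
      qed
    qed
  qed
  show ?thesis
  proof (rule extensionalityI)
    show "u \<in> extensional (hcarrier A)" "x \<in> extensional (hcarrier A)" using u x by (auto simp: homs_iff)
    fix a assume "a \<in> hcarrier A" then show "u a = x a" using claim[of "u a"] by auto
  qed
qed

lemma kernel_simeq:
  assumes sig: "\<sigma> \<in> Sigma_n n" and cl: "closed_alg A" and u: "u \<in> homs_to_Cn n A"
    and x: "x \<in> homs_to_Cn n A"
    and ker: "\<forall>a\<in>hcarrier A. \<forall>b\<in>hcarrier A. u a = u b \<longleftrightarrow> x a = x b"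
  shows "simeq n \<sigma> A u x"
proof -
  obtain u' where u': "(stp n \<sigma> A)\<^sup>*\<^sup>* u u'" "gapfree n A u'" "u' \<in> homs_to_Cn n A"
          "\<forall>a\<in>hcarrier A. \<forall>b\<in>hcarrier A. u' a = u' b \<longleftrightarrow> u a = u b"
    using gapfree_reach[OF sig cl u] by blast
  obtain x' where x': "(stp n \<sigma> A)\<^sup>*\<^sup>* x x'" "gapfree n A x'" "x' \<in> homs_to_Cn n A"
          "\<forall>a\<in>hcarrier A. \<forall>b\<in>hcarrier A. x' a = x' b \<longleftrightarrow> x a = x b"
    using gapfree_reach[OF sig cl x] by blast
  have "u' = x'" using gapfree_eq[OF cl u'(3) x'(3) u'(2) x'(2)] u'(4) x'(4) ker by blast
  moreover have "(stp n \<sigma> A)\<^sup>*\<^sup>* x' x" using rtranclp_sym_gen[OF x'(1)] stp_sym by metis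
  ultimately have "(stp n \<sigma> A)\<^sup>*\<^sup>* u x" using u'(1) by auto
  then show ?thesis by (rule rtranclp_simeq)
qed



lemma cyl_closed:
  assumes "finite K" "K \<subseteq> I"
  shows "closedin (product_topology (\<lambda>_. discrete_topology V) I) {y \<in> PiE I (\<lambda>_. V). \<forall>k\<in>K. y k = g k}"
  using assms
proof (induction K rule: finite_induct)
  case empty
  then show ?case using closedin_topspace[of "product_topology (\<lambda>_. discrete_topology V) I"] by simp
next
  case (insert k K)
  have k: "k \<in> I" using insert by simp
  have c1: "closedin (product_topology (\<lambda>_. discrete_topology V) I)
      {y \<in> topspace (product_topology (\<lambda>_. discrete_topology V) I). y k \<in> {g k} \<inter> V}"
    by (rule closedin_continuous_map_preimage[OF continuous_map_product_projection[OF k]]) simp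
  have eq: "{y \<in> PiE I (\<lambda>_. V). \<forall>k'\<in>insert k K. y k' = g k'} =
     {y \<in> topspace (product_topology (\<lambda>_. discrete_topology V) I). y k \<in> {g k} \<inter> V} \<inter>
     {y \<in> PiE I (\<lambda>_. V). \<forall>k\<in>K. y k = g k}"
    using k by (auto simp: PiE_iff)
  show ?case unfolding eq using c1 insert by auto
qed

lemma closed_dep:
  assumes K: "finite K" "K \<subseteq> I" and V: "finite V" and S: "S \<subseteq> PiE I (\<lambda>_. V)"
    and dep: "\<And>y y'. y \<in> S \<Longrightarrow> y' \<in> PiE I (\<lambda>_. V) \<Longrightarrow> (\<forall>k\<in>K. y' k = y k) \<Longrightarrow> y' \<in> S"
  shows "closedin (product_topology (\<lambda>_. discrete_topology V) I) S"
proof -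
  define C where "C = (\<lambda>g. {y \<in> PiE I (\<lambda>_. V). \<forall>k\<in>K. y k = g k})"
  have eq: "S = \<Union> (C ` ((\<lambda>y. restrict y K) ` S))"
  proof
    show "S \<subseteq> \<Union> (C ` ((\<lambda>y. restrict y K) ` S))"
    proof
      fix y assume y: "y \<in> S"
      then have "y \<in> C (restrict y K)" using S unfolding C_def by auto
      then show "y \<in> \<Union> (C ` ((\<lambda>y. restrict y K) ` S))" using y by blast
    qed
    show "\<Union> (C ` ((\<lambda>y. restrict y K) ` S)) \<subseteq> S"
      using dep unfolding C_def by auto
  qed
  have fin: "finite ((\<lambda>y. restrict y K) ` S)"
  proof (rule finite_subset)
    show "(\<lambda>y. restrict y K) ` S \<subseteq> PiE K (\<lambda>_. V)" using S K(2) by (fastforce simp: PiE_iff)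
    show "finite (PiE K (\<lambda>_. V))" using K V by (simp add: finite_PiE)
  qed
  show ?thesis
    by (subst eq, rule closedin_Union) (use fin cyl_closed[OF K] in \<open>auto simp: C_def\<close>)
qed

lemma hom_comp: "hom A B f \<Longrightarrow> hom B C g \<Longrightarrow> hom A C (g \<circ> f)"
  unfolding hom_def by (auto simp: image_subset_iff)

lemma Cn_power_hom:
  assumes "hom A (Cn_power n J) z"
  shows "\<And>a. a \<in> hcarrier A \<Longrightarrow> z a \<in> J \<rightarrow>\<^sub>E {0..<n}"
    and "z (hbot A) = restrict (\<lambda>i. 0) J" "z (htop A) = restrict (\<lambda>i. n - 1) J"
    and "\<And>a b j. a \<in> hcarrier A \<Longrightarrow> b \<in> hcarrier A \<Longrightarrow> j \<in> J \<Longrightarrow>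
       z (hmeet A a b) j = min (z a j) (z b j) \<and> z (hjoin A a b) j = max (z a j) (z b j) \<and>
       z (himp A a b) j = chain_imp n (z a j) (z b j)"
  using assms by (auto simp: hom_def Cn_power_def)

lemma proj_hom:
  assumes h: "hom B (Cn_power n J) e" and cl: "closed_alg B" and j: "j \<in> J"
  shows "restrict (\<lambda>b. e b j) (hcarrier B) \<in> homs_to_Cn n B"
proof -
  note H = Cn_power_hom[OF h]
  have cl': "hbot B \<in> hcarrier B" "htop B \<in> hcarrier B"
    "\<And>a b. a \<in> hcarrier B \<Longrightarrow> b \<in> hcarrier B \<Longrightarrow> hmeet B a b \<in> hcarrier B \<and> hjoin B a b \<in> hcarrier B \<and> himp B a b \<in> hcarrier B"
    using cl by (auto simp: closed_alg_def)
  have r: "b \<in> hcarrier B \<Longrightarrow> e b j < n" for b using H(1)[of b] j by (auto simp: PiE_iff)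
  show ?thesis unfolding homs_iff hom_Cn_iff
    using cl' H(2,3) H(4) j r by auto
qed

lemma collapse_hom:
  assumes u: "u \<in> homs_to_Cn n A" and cl: "closed_alg A" and th: "1 \<le> \<theta>"
  shows "restrict ((\<lambda>k. if \<theta> \<le> k then n - 1 else k) \<circ> u) (hcarrier A) \<in> homs_to_Cn n A"
proof (rule comp_hom[OF u cl])
  fix p q assume "p \<in> u ` hcarrier A" "q \<in> u ` hcarrier A"
  then have pq: "p < n" "q < n" using homs_range[OF u] by auto
  show "(if \<theta> \<le> min p q then n - 1 else min p q) = min (if \<theta> \<le> p then n - 1 else p) (if \<theta> \<le> q then n - 1 else q)"
    using pq by (auto simp: min_def)
  show "(if \<theta> \<le> max p q then n - 1 else max p q) = max (if \<theta> \<le> p then n - 1 else p) (if \<theta> \<le> q then n - 1 else q)"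
    using pq by (auto simp: max_def)
  show "(if \<theta> \<le> chain_imp n p q then n - 1 else chain_imp n p q) =
        chain_imp n (if \<theta> \<le> p then n - 1 else p) (if \<theta> \<le> q then n - 1 else q)"
    using pq by (auto simp: chain_imp_def)
next
  show "(if \<theta> \<le> 0 then n - 1 else 0) = 0" using th by simp
  show "(if \<theta> \<le> n - 1 then n - 1 else n - 1) = n - 1" by simp
next
  fix p assume "p \<in> u ` hcarrier A"
  then have "p < n" using homs_range[OF u] by auto
  then show "(if \<theta> \<le> p then n - 1 else p) < n" by auto
qed



lemma join_exists:
  assumes cl: "closed_alg A" and hz: "hom A (Cn_power n J) z" and x: "x \<in> homs_to_Cn n A"
    and n: "2 \<le> n" and D: "finite D" "D \<subseteq> hcarrier A" "\<forall>d\<in>D. x d < n - 1"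
  shows "\<exists>w\<in>hcarrier A. x w < n - 1 \<and> (\<forall>j\<in>J. (\<exists>d\<in>D. z d j = n - 1) \<longrightarrow> z w j = n - 1)"
  using D
proof (induction D rule: finite_induct)
  case empty
  have "hbot A \<in> hcarrier A" using cl by (simp add: closed_alg_def)
  moreover have "x (hbot A) = 0" using x by (simp add: homs_iff hom_Cn_iff)
  ultimately show ?case using n by (intro bexI[of _ "hbot A"]) auto
next
  case (insert d D)
  then obtain w where w: "w \<in> hcarrier A" "x w < n - 1" "\<forall>j\<in>J. (\<exists>d\<in>D. z d j = n - 1) \<longrightarrow> z w j = n - 1"
    by auto
  have d: "d \<in> hcarrier A" "x d < n - 1" using insert.prems by auto
  have jc: "hjoin A d w \<in> hcarrier A" using cl d w by (simp add: closed_alg_def)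
  have xj: "x (hjoin A d w) = max (x d) (x w)" using x d w by (simp add: homs_iff hom_Cn_iff)
  have zj: "\<And>j. j \<in> J \<Longrightarrow> z (hjoin A d w) j = max (z d j) (z w j)" using Cn_power_hom(4)[OF hz] d w by blast
  have zr: "\<And>a j. a \<in> hcarrier A \<Longrightarrow> j \<in> J \<Longrightarrow> z a j < n" using Cn_power_hom(1)[OF hz] by (auto simp: PiE_iff)
  show ?case
  proof (intro bexI[of _ "hjoin A d w"] conjI ballI impI)
    show "x (hjoin A d w) < n - 1" using xj d w by simp
    fix j assume j: "j \<in> J" and ex: "\<exists>d'\<in>insert d D. z d' j = n - 1"
    have "z d j = n - 1 \<or> z w j = n - 1" using ex w(3) j by auto
    then show "z (hjoin A d w) j = n - 1" using zj[OF j] zr[OF d(1) j] zr[OF w(1) j] by auto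
  qed (rule jc)
qed

lemma fin_version:
  assumes n: "2 \<le> n" and clA: "closed_alg A" and clB: "closed_alg B" and hf: "hom A B f"
    and inj: "inj_on f (hcarrier A)" and emb: "embedding B (Cn_power n J) e"
    and x: "x \<in> homs_to_Cn n A" and G: "finite G" "G \<subseteq> hcarrier A"
  shows "\<exists>y\<in>homs_to_Cn n B. \<forall>a\<in>G. \<forall>a'\<in>G.
           (x a < x a' \<longrightarrow> y (f a) < y (f a')) \<and> (x a = n - 1 \<longrightarrow> y (f a) = n - 1)"
proof -
  define G' where "G' = insert (hbot A) G"
  have botA: "hbot A \<in> hcarrier A" "htop A \<in> hcarrier A" using clA by (auto simp: closed_alg_def)
  have impA: "\<And>a b. a \<in> hcarrier A \<Longrightarrow> b \<in> hcarrier A \<Longrightarrow> himp A a b \<in> hcarrier A"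
    using clA by (auto simp: closed_alg_def)
  have G': "finite G'" "G' \<subseteq> hcarrier A" "hbot A \<in> G'" using G botA unfolding G'_def by auto
  have he: "hom B (Cn_power n J) e" and inje: "inj_on e (hcarrier B)" using emb by (auto simp: embedding_def)
  define z where "z = e \<circ> f"
  have hz: "hom A (Cn_power n J) z" unfolding z_def by (rule hom_comp[OF hf he])
  have fB: "\<And>a. a \<in> hcarrier A \<Longrightarrow> f a \<in> hcarrier B" using hf by (auto simp: hom_def)
  have xh: "x (hbot A) = 0" "x (htop A) = n - 1"
    and ximp: "\<And>a b. a \<in> hcarrier A \<Longrightarrow> b \<in> hcarrier A \<Longrightarrow> x (himp A a b) = chain_imp n (x a) (x b)"
    using x by (auto simp: homs_iff hom_Cn_iff)
  have xr: "\<And>a. a \<in> hcarrier A \<Longrightarrow> x a < n" using homs_range[OF x] .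
  have zr: "\<And>a j. a \<in> hcarrier A \<Longrightarrow> j \<in> J \<Longrightarrow> z a j < n" using Cn_power_hom(1)[OF hz] by (auto simp: PiE_iff)
  define D where "D = (\<lambda>(a,a'). himp A a a') ` {p \<in> G' \<times> G'. x (snd p) < x (fst p)} \<union>
                     (\<lambda>(c,r). himp A c r) ` {p \<in> G' \<times> G'. x (fst p) = n - 1 \<and> x (snd p) < n - 1}"
  have Dfin: "finite D" unfolding D_def using G' by auto
  have Dsub: "D \<subseteq> hcarrier A" unfolding D_def using G' impA by auto
  have Dlt: "\<forall>d\<in>D. x d < n - 1"
  proof
    fix d assume "d \<in> D"
    then consider (a) a a' where "a \<in> G'" "a' \<in> G'" "x a' < x a" "d = himp A a a'"
      | (b) c r where "c \<in> G'" "r \<in> G'" "x c = n - 1" "x r < n - 1" "d = himp A c r"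
      unfolding D_def by auto
    then show "x d < n - 1"
    proof cases
      case a
      have "a \<in> hcarrier A" "a' \<in> hcarrier A" using a G' by auto
      then have "x d = x a'" using ximp[of a a'] a by (simp add: chain_imp_def)
      moreover have "x a < n" using a G' xr by auto
      ultimately show ?thesis using a by simp
    next
      case b
      have "c \<in> hcarrier A" "r \<in> hcarrier A" using b G' by auto
      then have "x d = x r" using ximp[of c r] b by (simp add: chain_imp_def)
      then show ?thesis using b by simp
    qed
  qed
  obtain w where w: "w \<in> hcarrier A" "x w < n - 1" "\<forall>j\<in>J. (\<exists>d\<in>D. z d j = n - 1) \<longrightarrow> z w j = n - 1"
    using join_exists[OF clA hz x n Dfin Dsub Dlt] by blast
  obtain j where j: "j \<in> J" "\<forall>d\<in>D. z d j \<noteq> n - 1"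
  proof (rule ccontr)
    assume "\<not> thesis"
    then have all: "\<forall>j\<in>J. z w j = n - 1" using that w(3) by blast
    have "z w = z (htop A)"
    proof (rule extensionalityI)
      show "z w \<in> extensional J" using Cn_power_hom(1)[OF hz w(1)] by (simp add: PiE_iff)
      show "z (htop A) \<in> extensional J" using Cn_power_hom(3)[OF hz] by simp
      fix i assume "i \<in> J" then show "z w i = z (htop A) i" using all Cn_power_hom(3)[OF hz] by simp
    qed
    then have "f w = f (htop A)" using inje fB[OF w(1)] fB[OF botA(2)] unfolding z_def by (auto dest: inj_onD)
    then have "w = htop A" using inj w(1) botA(2) by (auto dest: inj_onD)
    then show False using w(2) xh by simp
  qed
  define val where "val = (\<lambda>a. z a j)"
  have zimp: "\<And>a b. a \<in> hcarrier A \<Longrightarrow> b \<in> hcarrier A \<Longrightarrow> z (himp A a b) j = chain_imp n (z a j) (z b j)"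
    using Cn_power_hom(4)[OF hz] j(1) by blast
  have mono1: "val a' < val a" if "a \<in> G'" "a' \<in> G'" "x a' < x a" for a a'
  proof -
    have "himp A a a' \<in> D" unfolding D_def using that by force
    then have "z (himp A a a') j \<noteq> n - 1" using j(2) by blast
    moreover have "a \<in> hcarrier A" "a' \<in> hcarrier A" using G' that by auto
    ultimately have "chain_imp n (val a) (val a') \<noteq> n - 1" using zimp unfolding val_def by simp
    then show ?thesis using chain_imp_top zr G' that j(1) unfolding val_def by (meson not_le subsetD)
  qed
  have mono2: "val r < val c" if "c \<in> G'" "r \<in> G'" "x c = n - 1" "x r < n - 1" for c r
  proof -
    have "himp A c r \<in> D" unfolding D_def using that by force
    then have "z (himp A c r) j \<noteq> n - 1" using j(2) by blast
    moreover have "c \<in> hcarrier A" "r \<in> hcarrier A" using G' that by auto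
    ultimately have "chain_imp n (val c) (val r) \<noteq> n - 1" using zimp unfolding val_def by simp
    then show ?thesis using chain_imp_top zr G' that j(1) unfolding val_def by (meson not_le subsetD)
  qed
  define Vs where "Vs = val ` {r \<in> G'. x r < n - 1}"
  define \<theta> where "\<theta> = Suc (Max (insert 0 Vs))"
  have Vsfin: "finite (insert 0 Vs)" unfolding Vs_def using G' by auto
  define \<phi> where "\<phi> = (\<lambda>k::nat. if \<theta> \<le> k then n - 1 else k)"
  define p where "p = restrict (\<lambda>b. e b j) (hcarrier B)"
  have ph: "p \<in> homs_to_Cn n B" unfolding p_def by (rule proj_hom[OF he clB j(1)])
  define y where "y = restrict (\<phi> \<circ> p) (hcarrier B)"
  have yh: "y \<in> homs_to_Cn n B" unfolding y_def \<phi>_def by (rule collapse_hom[OF ph clB]) (simp add: \<theta>_def)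
  have yv: "y (f a) = \<phi> (val a)" if "a \<in> hcarrier A" for a
    using fB[OF that] unfolding y_def p_def val_def z_def by simp
  have below: "val a < \<theta>" if "a \<in> G'" "x a < n - 1" for a
  proof -
    have "val a \<in> insert 0 Vs" unfolding Vs_def using that by auto
    then have "val a \<le> Max (insert 0 Vs)" using Vsfin by simp
    then show ?thesis unfolding \<theta>_def by simp
  qed
  have above: "\<theta> \<le> val c" if "c \<in> G'" "x c = n - 1" for c
  proof -
    have "Max (insert 0 Vs) \<in> insert 0 Vs" using Vsfin by (intro Max_in) auto
    moreover have "0 < val c"
    proof -
      have "val (hbot A) < val c" using mono2[OF that(1) G'(3) that(2)] xh n by simp
      then show ?thesis by simp
    qed
    moreover have "\<forall>v\<in>Vs. v < val c" unfolding Vs_def using mono2 that by auto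
    ultimately have "Max (insert 0 Vs) < val c" by auto
    then show ?thesis unfolding \<theta>_def by simp
  qed
  show ?thesis
  proof (intro bexI[OF _ yh] ballI conjI impI)
    fix a a' assume a: "a \<in> G" "a' \<in> G"
    then have a': "a \<in> G'" "a' \<in> G'" "a \<in> hcarrier A" "a' \<in> hcarrier A" using G' unfolding G'_def by auto
    {
      assume lt: "x a < x a'"
      have v: "val a < val a'" using mono1[OF a'(2,1) lt] .
      have "x a' < n" using xr a' by auto
      then have xa: "x a < n - 1" using lt by simp
      have b: "val a < \<theta>" using below[OF a'(1) xa] .
      have "val a' < n" using zr a' j(1) unfolding val_def by auto
      then show "y (f a) < y (f a')" using yv a' v b unfolding \<phi>_def by auto
    }
    {
      assume t: "x a = n - 1"
      show "y (f a) = n - 1" using yv a' above[OF a'(1) t] unfolding \<phi>_def by auto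
    }
  qed
qed



lemma compact_version:
  assumes n: "2 \<le> n" and clA: "closed_alg A" and clB: "closed_alg B" and hf: "hom A B f"
    and inj: "inj_on f (hcarrier A)" and emb: "embedding B (Cn_power n J) e"
    and x: "x \<in> homs_to_Cn n A"
  shows "\<exists>y\<in>homs_to_Cn n B. \<forall>a\<in>hcarrier A. \<forall>a'\<in>hcarrier A.
           (x a < x a' \<longrightarrow> y (f a) < y (f a')) \<and> (x a = n - 1 \<longrightarrow> y (f a) = n - 1)"
proof -
  define X where "X = product_topology (\<lambda>_. discrete_topology {0..<n}) (hcarrier B)"
  have cs: "compact_space X" unfolding X_def
    by (simp add: compact_space_product_topology compact_space_discrete_topology)
  have fB: "\<And>a. a \<in> hcarrier A \<Longrightarrow> f a \<in> hcarrier B" using hf by (auto simp: hom_def)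
  have clB': "hbot B \<in> hcarrier B" "htop B \<in> hcarrier B"
    "\<And>a b. a \<in> hcarrier B \<Longrightarrow> b \<in> hcarrier B \<Longrightarrow> hmeet B a b \<in> hcarrier B \<and> hjoin B a b \<in> hcarrier B \<and> himp B a b \<in> hcarrier B"
    using clB by (auto simp: closed_alg_def)
  define P where "P = PiE (hcarrier B) (\<lambda>_. {0..<n})"
  define Kp where "Kp = (\<lambda>(a,a'). {y \<in> P. (x a < x a' \<longrightarrow> y (f a) < y (f a')) \<and> (x a = n - 1 \<longrightarrow> y (f a) = n - 1)})"
  define Kh where "Kh = (\<lambda>(b,b'). {y \<in> P. y (hbot B) = 0 \<and> y (htop B) = n - 1 \<and>
       y (hmeet B b b') = min (y b) (y b') \<and> y (hjoin B b b') = max (y b) (y b') \<and>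
       y (himp B b b') = chain_imp n (y b) (y b')})"
  define U where "U = Kp ` (hcarrier A \<times> hcarrier A) \<union> Kh ` (hcarrier B \<times> hcarrier B)"
  have closed: "\<forall>C\<in>U. closedin X C"
  proof
    fix C assume "C \<in> U"
    then consider (p) a a' where "a \<in> hcarrier A" "a' \<in> hcarrier A" "C = Kp (a, a')"
      | (h) b b' where "b \<in> hcarrier B" "b' \<in> hcarrier B" "C = Kh (b, b')"
      unfolding U_def by auto
    then show "closedin X C"
    proof cases
      case p
      show ?thesis unfolding X_def p(3)
        by (rule closed_dep[of "{f a, f a'}"]) (use p fB in \<open>auto simp: Kp_def P_def\<close>)
    next
      case h
      show ?thesis unfolding X_def h(3)
        by (rule closed_dep[of "{hbot B, htop B, b, b', hmeet B b b', hjoin B b b', himp B b b'}"])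
           (use h clB' in \<open>auto simp: Kh_def P_def\<close>)
    qed
  qed
  have homP: "y \<in> P" if "y \<in> homs_to_Cn n B" for y
    using that unfolding P_def homs_iff hom_Cn_iff by (auto simp: PiE_iff)
  have homKh: "y \<in> Kh (b, b')" if "y \<in> homs_to_Cn n B" "b \<in> hcarrier B" "b' \<in> hcarrier B" for y b b'
    using that homP[OF that(1)] unfolding Kh_def homs_iff hom_Cn_iff by auto
  have fip: "\<forall>F. finite F \<and> F \<subseteq> U \<longrightarrow> \<Inter>F \<noteq> {}"
  proof (intro allI impI)
    fix F assume F: "finite F \<and> F \<subseteq> U"
    have "finite (F \<inter> Kp ` (hcarrier A \<times> hcarrier A))" using F by auto
    then obtain Q where Q: "Q \<subseteq> hcarrier A \<times> hcarrier A" "finite Q"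
      "F \<inter> Kp ` (hcarrier A \<times> hcarrier A) = Kp ` Q"
      using finite_subset_image[of "F \<inter> Kp ` (hcarrier A \<times> hcarrier A)" Kp "hcarrier A \<times> hcarrier A"]
      by blast
    define G where "G = fst ` Q \<union> snd ` Q"
    have G: "finite G" "G \<subseteq> hcarrier A" using Q unfolding G_def by auto
    obtain y where y: "y \<in> homs_to_Cn n B" and yG: "\<forall>a\<in>G. \<forall>a'\<in>G.
           (x a < x a' \<longrightarrow> y (f a) < y (f a')) \<and> (x a = n - 1 \<longrightarrow> y (f a) = n - 1)"
      using fin_version[OF n clA clB hf inj emb x G] by blast
    have "y \<in> \<Inter>F"
    proof
      fix C assume C: "C \<in> F"
      then have "C \<in> U" using F by auto
      then show "y \<in> C"
      proof (cases "C \<in> Kp ` (hcarrier A \<times> hcarrier A)")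
        case True
        then have "C \<in> Kp ` Q" using Q(3) C by blast
        then obtain a a' where aa: "(a, a') \<in> Q" "C = Kp (a, a')" by auto
        then have "a \<in> G" "a' \<in> G" unfolding G_def by force+
        then show ?thesis using yG homP[OF y] aa(2) unfolding Kp_def by auto
      next
        case False
        then obtain b b' where "b \<in> hcarrier B" "b' \<in> hcarrier B" "C = Kh (b, b')"
          using \<open>C \<in> U\<close> unfolding U_def by auto
        then show ?thesis using homKh[OF y] by simp
      qed
    qed
    then show "\<Inter>F \<noteq> {}" by blast
  qed
  have "\<Inter>U \<noteq> {}" using cs closed fip unfolding compact_space_fip by blast
  then obtain y where y: "y \<in> \<Inter>U" by blast
  have yKh: "\<And>b b'. b \<in> hcarrier B \<Longrightarrow> b' \<in> hcarrier B \<Longrightarrow> y \<in> Kh (b, b')"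
    using y unfolding U_def by auto
  have yKp: "\<And>a a'. a \<in> hcarrier A \<Longrightarrow> a' \<in> hcarrier A \<Longrightarrow> y \<in> Kp (a, a')"
    using y unfolding U_def by auto
  have yP: "y \<in> P" using yKh[OF clB'(1) clB'(1)] unfolding Kh_def by auto
  have yh: "y \<in> homs_to_Cn n B"
    unfolding homs_iff hom_Cn_iff
  proof (intro conjI ballI)
    show "y \<in> extensional (hcarrier B)" using yP unfolding P_def by (simp add: PiE_iff)
    show "y ` hcarrier B \<subseteq> {0..<n}" using yP unfolding P_def by (auto simp: PiE_iff)
    show "y (hbot B) = 0" "y (htop B) = n - 1" using yKh[OF clB'(1) clB'(1)] unfolding Kh_def by auto
    fix a b assume "a \<in> hcarrier B" "b \<in> hcarrier B"
    then show "y (hmeet B a b) = min (y a) (y b)" "y (hjoin B a b) = max (y a) (y b)"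
      "y (himp B a b) = chain_imp n (y a) (y b)" using yKh unfolding Kh_def by auto
  qed
  show ?thesis using yh yKp unfolding Kp_def by (intro bexI[OF _ yh]) auto
qed

lemma hom_restrict: "closed_alg A \<Longrightarrow> hom A C g \<Longrightarrow> hom A C (restrict g (hcarrier A))"
  unfolding hom_def closed_alg_def by (auto simp: image_subset_iff)

theorem lemma6p3:
  fixes n :: nat and A :: "'a halg" and B :: "'b halg" and f :: "'a \<Rightarrow> 'b"
    and \<sigma> :: "nat \<Rightarrow> (nat \<rightharpoonup> nat)"
  assumes "n \<ge> 4" and "in_Gn n A" and "in_Gn n B" and "hom A B f"
    and "\<sigma> \<in> Sigma_n n"
  shows "inj_on f (hcarrier A) \<longleftrightarrow>
         (\<forall>x \<in> homs_to_Cn n A. \<exists>y \<in> homs_to_Cn n B.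
            simeq n \<sigma> A (restrict (y \<circ> f) (hcarrier A)) x)"
proof -
  have n: "2 \<le> n" using assms(1) by simp
  have clA: "closed_alg A" and clB: "closed_alg B" using assms(2,3) by (auto simp: in_Gn_def)
  obtain IA :: "('a \<Rightarrow> nat) set" and eA where embA: "embedding A (Cn_power n IA) eA" using assms(2) by (auto simp: in_Gn_def)
  obtain IB :: "('b \<Rightarrow> nat) set" and eB where embB: "embedding B (Cn_power n IB) eB" using assms(3) by (auto simp: in_Gn_def)
  have hf: "hom A B f" by fact
  have sig: "\<sigma> \<in> Sigma_n n" by fact
  have clA': "\<And>a b. a \<in> hcarrier A \<Longrightarrow> b \<in> hcarrier A \<Longrightarrow> himp A a b \<in> hcarrier A"
    using clA by (auto simp: closed_alg_def)
  have fB: "\<And>a. a \<in> hcarrier A \<Longrightarrow> f a \<in> hcarrier B" using hf by (auto simp: hom_def)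
  have fimp: "\<And>a b. a \<in> hcarrier A \<Longrightarrow> b \<in> hcarrier A \<Longrightarrow> f (himp A a b) = himp B (f a) (f b)"
    using hf by (auto simp: hom_def)
  show ?thesis
  proof
    assume inj: "inj_on f (hcarrier A)"
    show "\<forall>x \<in> homs_to_Cn n A. \<exists>y \<in> homs_to_Cn n B. simeq n \<sigma> A (restrict (y \<circ> f) (hcarrier A)) x"
    proof
      fix x assume x: "x \<in> homs_to_Cn n A"
      obtain y where y: "y \<in> homs_to_Cn n B" and yp: "\<forall>a\<in>hcarrier A. \<forall>a'\<in>hcarrier A.
           (x a < x a' \<longrightarrow> y (f a) < y (f a')) \<and> (x a = n - 1 \<longrightarrow> y (f a) = n - 1)"
        using compact_version[OF n clA clB hf inj embB x] by blast
      define u where "u = restrict (y \<circ> f) (hcarrier A)"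
      have hy: "hom B (Cn n) y" using y by (simp add: homs_iff)
      have uh: "u \<in> homs_to_Cn n A" unfolding u_def homs_iff
        using hom_restrict[OF clA hom_comp[OF hf hy]] by simp
      have yimp: "\<And>a b. a \<in> hcarrier B \<Longrightarrow> b \<in> hcarrier B \<Longrightarrow> y (himp B a b) = chain_imp n (y a) (y b)"
        using hy by (auto simp: hom_Cn_iff)
      have yr: "\<And>b. b \<in> hcarrier B \<Longrightarrow> y b < n" using homs_range[OF y] .
      have ximp: "\<And>a b. a \<in> hcarrier A \<Longrightarrow> b \<in> hcarrier A \<Longrightarrow> x (himp A a b) = chain_imp n (x a) (x b)"
        using x by (auto simp: homs_iff hom_Cn_iff)
      have xr: "\<And>a. a \<in> hcarrier A \<Longrightarrow> x a < n" using homs_range[OF x] .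
      have le: "y (f a) \<le> y (f b)" if "a \<in> hcarrier A" "b \<in> hcarrier A" "x a \<le> x b" for a b
      proof -
        have "x (himp A a b) = n - 1" using ximp[OF that(1,2)] that(3) by (simp add: chain_imp_def)
        then have "y (f (himp A a b)) = n - 1" using yp clA'[OF that(1,2)] by blast
        then have "chain_imp n (y (f a)) (y (f b)) = n - 1"
          using fimp[OF that(1,2)] yimp[OF fB[OF that(1)] fB[OF that(2)]] by simp
        then show ?thesis using chain_imp_top yr fB that(1,2) by blast
      qed
      have ker: "\<forall>a\<in>hcarrier A. \<forall>b\<in>hcarrier A. u a = u b \<longleftrightarrow> x a = x b"
      proof (intro ballI)
        fix a b assume ab: "a \<in> hcarrier A" "b \<in> hcarrier A"
        show "u a = u b \<longleftrightarrow> x a = x b"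
        proof
          assume "x a = x b"
          then show "u a = u b" using le[OF ab] le[OF ab(2,1)] ab unfolding u_def by simp
        next
          assume uab: "u a = u b"
          show "x a = x b"
          proof (rule ccontr)
            assume "x a \<noteq> x b"
            then have "x a < x b \<or> x b < x a" by auto
            then have "y (f a) \<noteq> y (f b)" using yp ab by fastforce
            then show False using uab ab unfolding u_def by simp
          qed
        qed
      qed
      have "simeq n \<sigma> A u x" by (rule kernel_simeq[OF sig clA uh x ker])
      then show "\<exists>y \<in> homs_to_Cn n B. simeq n \<sigma> A (restrict (y \<circ> f) (hcarrier A)) x"
        using y unfolding u_def by blast
    qed
  next
    assume R: "\<forall>x \<in> homs_to_Cn n A. \<exists>y \<in> homs_to_Cn n B. simeq n \<sigma> A (restrict (y \<circ> f) (hcarrier A)) x"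
    show "inj_on f (hcarrier A)"
    proof (rule inj_onI)
      fix a b assume ab: "a \<in> hcarrier A" "b \<in> hcarrier A" and fab: "f a = f b"
      show "a = b"
      proof (rule ccontr)
        assume "a \<noteq> b"
        have he: "hom A (Cn_power n IA) eA" and ie: "inj_on eA (hcarrier A)"
          using embA by (auto simp: embedding_def)
        have "eA a \<noteq> eA b" using ie ab \<open>a \<noteq> b\<close> by (auto dest: inj_onD)
        moreover have "eA a \<in> extensional IA" "eA b \<in> extensional IA"
          using Cn_power_hom(1)[OF he] ab by (auto simp: PiE_iff)
        ultimately obtain i where i: "i \<in> IA" "eA a i \<noteq> eA b i"
          by (meson extensionalityI)
        define x where "x = restrict (\<lambda>c. eA c i) (hcarrier A)"
        have x: "x \<in> homs_to_Cn n A" unfolding x_def by (rule proj_hom[OF he clA i(1)])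
        obtain y where y: "y \<in> homs_to_Cn n B" and s: "simeq n \<sigma> A (restrict (y \<circ> f) (hcarrier A)) x"
          using R x by blast
        have "restrict (y \<circ> f) (hcarrier A) a = restrict (y \<circ> f) (hcarrier A) b" using fab ab by simp
        then have "x a = x b" using simeq_kernel[OF sig s ab] by simp
        then show False using i ab unfolding x_def by simp
      qed
    qed
  qed
qed


end
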